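(* Let $c\colon[0,1]\to\mathbb{R}^n$ be a continuous curve and let $X$ be an open and dense subset of $\mathbb{R}^n$. Then there exists a dense set $A\subset\mathbb{R}^n$ (in fact a set of second Baire category) such that for each $\alpha\in A$ the set $F_\alpha:=\{t\in[0,1]\,:\, c(t)+\alpha\in X\}$ is open and dense in $[0,1]$. *)

theory Defs
  imports "HOL-Analysis.Analysis"
begin

definition nowhere_dense :: "'a::topological_space set \<Rightarrow> bool" where
  "nowhere_dense S \<longleftrightarrow> interior (closure S) = {}"

text \<open>A set is meager (of first Baire category) if it is contained in a countable
  union of nowhere dense sets; a set of second Baire category is one that is not meager.\<close>
definition meager :: "'a::topological_space set \<Rightarrow> bool" where
  "meager S \<longleftrightarrow> (\<exists>\<F>. countable \<F> \<and> (\<forall>N\<in>\<F>. nowhere_dense N) \<and> S \<subseteq> \<Union>\<F>)"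

end

theory Submission
  imports Defs
begin

theorem lemma2p1:
  fixes c :: "real \<Rightarrow> real ^ 'n" and X :: "(real ^ 'n) set"
  assumes "continuous_on {0..1} c"
    and "open X" and "closure X = UNIV"
  shows "\<exists>A :: (real ^ 'n) set. closure A = UNIV \<and> \<not> meager A \<and>
           (\<forall>\<alpha>\<in>A. openin (top_of_set {0..1}) {t\<in>{0..1}. c t + \<alpha> \<in> X} \<and>
                    {0..1} \<subseteq> closure {t\<in>{0..1}. c t + \<alpha> \<in> X})"
proof -
  define Q where "Q = \<rat> \<inter> {0..1::real}"
  have cQ: "countable Q" unfolding Q_def using countable_rat by blast
  define U where "U q = {\<alpha>. c q + \<alpha> \<in> X}" for q
  have Ueq: "U q = (+) (- c q) ` X" for q
    unfolding U_def by (force simp: image_iff algebra_simps)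
  have Uopen: "open (U q)" for q
    unfolding Ueq using assms(2) by (rule open_translation)
  have Udense: "closure (U q) = UNIV" for q
    unfolding Ueq closure_translation assms(3) by (simp add: surj_def)
  define G where "G = \<Inter>(U ` Q)"
  have dense: "closure (\<Inter>\<G>) = UNIV" if "countable \<G>" "\<And>T. T \<in> \<G> \<Longrightarrow> open T \<and> closure T = UNIV"
    for \<G> :: "(real^'n) set set"
    using Baire[of "UNIV :: (real^'n) set" \<G>] that by auto
  have Gd: "closure G = UNIV"
    unfolding G_def using cQ Uopen Udense by (intro dense) auto
  have Gnm: "\<not> meager G"
  proof
    assume "meager G"
    then obtain F where F: "countable F" "\<forall>N\<in>F. nowhere_dense N" "G \<subseteq> \<Union>F"
      unfolding meager_def by blast
    define H where "H = U ` Q \<union> (\<lambda>N. - closure N) ` F"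
    have "closure (\<Inter>H) = UNIV"
    proof (rule dense)
      show "countable H" unfolding H_def using cQ F(1) by auto
      fix T assume "T \<in> H"
      then show "open T \<and> closure T = UNIV"
        unfolding H_def using Uopen Udense F(2)
        by (auto simp: closure_complement nowhere_dense_def)
    qed
    then have "\<Inter>H \<noteq> {}" by (metis closure_empty UNIV_not_empty)
    then obtain x where x: "x \<in> \<Inter>H" by blast
    then have "x \<in> G" unfolding H_def G_def by auto
    with F(3) obtain N where "N \<in> F" "x \<in> N" by auto
    moreover have "x \<in> - closure N" using x \<open>N \<in> F\<close> unfolding H_def by auto
    ultimately show False using closure_subset by blast
  qed
  have Qd: "{0..1} \<subseteq> closure Q"
  proof -
    have "{0<..<1::real} \<inter> closure \<rat> \<subseteq> closure ({0<..<1} \<inter> \<rat>)"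
      by (rule open_Int_closure_subset) simp
    then have "{0<..<1::real} \<subseteq> closure Q"
      unfolding Rats_closure_real Q_def
      by (smt (verit, ccfv_threshold) Int_UNIV_right Int_commute closure_mono greaterThanLessThan_subseteq_atLeastAtMost_iff inf.absorb_iff2 inf.coboundedI2 inf.orderE le_inf_iff order_refl)
    then have "closure {0<..<1::real} \<subseteq> closure Q"
      by (meson closed_closure closure_minimal)
    moreover have "closure {0<..<1::real} = {0..1}" by (rule closure_greaterThanLessThan) simp
    ultimately show ?thesis by simp
  qed
  show ?thesis
  proof (intro exI[of _ G] conjI Gd Gnm ballI)
    fix \<alpha> assume a: "\<alpha> \<in> G"
    have "continuous_on {0..1} (\<lambda>t. c t + \<alpha>)"
      using assms(1) by (intro continuous_intros)
    then have "openin (top_of_set {0..1}) ({0..1} \<inter> (\<lambda>t. c t + \<alpha>) -` X)"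
      using assms(2) by (rule continuous_openin_preimage_gen)
    moreover have "{0..1} \<inter> (\<lambda>t. c t + \<alpha>) -` X = {t\<in>{0..1}. c t + \<alpha> \<in> X}"
      by auto
    ultimately show "openin (top_of_set {0..1}) {t\<in>{0..1}. c t + \<alpha> \<in> X}"
      by simp
    have "Q \<subseteq> {t\<in>{0..1}. c t + \<alpha> \<in> X}"
      using a unfolding G_def U_def Q_def by auto
    then show "{0..1} \<subseteq> closure {t\<in>{0..1}. c t + \<alpha> \<in> X}"
      using Qd closure_mono by blast
  qed
qed

end
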